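(* Let $0<\tau\le2^*-1$ be fixed. In the setting below, there exists a sequence $\sigma_\alpha\to0$ of positive numbers depending only on $(\mu_{i,\alpha})_\alpha$ and $(x_{i,\alpha})_\alpha$, $1\le i\le k$, such that for all $\alpha$ and all $x\in M$ $$\Big(\sum_{i=1}^kB_{i,\alpha}(x)\Big)^{2^*-1-\tau}\Big(\sum_{i=1}^k\Theta_{i,\alpha}(x)B_{i,\alpha}(x)\Big)^{\tau}\le\sigma_\alpha\Big(\sum_{i=0}^kB_{i,\alpha}(x)+\sum_{i=1}^kB_{i,\alpha}(x)^{2^*-1}\Big).$$
   Context: $(M,g)$ smooth closed Riemannian manifold, $n\ge3$, $2^*=\frac{2n}{n-2}$; $k\ge1$; $x_{i,\alpha}\in M$, $\mu_{i,\alpha}>0$ ($1\le i\le k$) with $\mu_{i,\alpha}\to0$ and, for $i\ne j$, $\frac{\mu_{i,\alpha}}{\mu_{j,\alpha}}+\frac{\mu_{j,\alpha}}{\mu_{i,\alpha}}+\frac{d_g(x_{i,\alpha},x_{j,\alpha})^2}{\mu_{i,\alpha}\mu_{j,\alpha}}\to\infty$. $B_{i,\alpha}(x)=\mu_{i,\alpha}^{\frac{n-2}{2}}(\mu_{i,\alpha}^2+\frac{d_g(x_{i,\alpha},x)^2}{n(n-2)})^{-\frac{n-2}{2}}$ for $1\le i\le k$; $B_{0,\alpha}$ is either identically $0$ or identically $1$ (it equals $0$ iff $u_0\equiv0$ and $\ker(\triangle_g+h)=\{0\}$, for given $h\in L^\infty(M)$ and a solution $u_0$ of $\triangle_gu_0+hu_0=|u_0|^{2^*-2}u_0$).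 $\theta_{i,\alpha}(x)=\mu_{i,\alpha}+d_g(x_{i,\alpha},x)$; $\Theta_{i,\alpha}=\theta_{i,\alpha}$ if $n=3$, $\theta_{i,\alpha}^2|\ln\theta_{i,\alpha}|$ if $n=4$, $\theta_{i,\alpha}^2$ if $n\ge5$. *)

theory Defs
  imports "HOL-Analysis.Analysis"
begin

definition crit_exp :: "nat \<Rightarrow> real" where
  "crit_exp n = 2 * real n / (real n - 2)"

definition bubble :: "nat \<Rightarrow> real \<Rightarrow> real \<Rightarrow> real" where
  "bubble n mu d = mu powr ((real n - 2) / 2)
      * (mu\<^sup>2 + d\<^sup>2 / (real n * (real n - 2))) powr (- (real n - 2) / 2)"

text \<open>theta = mu + d; Theta = theta (n=3), theta^2 |ln theta| (n=4), theta^2 (n>=5).\<close>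
definition Theta :: "nat \<Rightarrow> real \<Rightarrow> real" where
  "Theta n t = (if n = 3 then t else if n = 4 then t\<^sup>2 * \<bar>ln t\<bar> else t\<^sup>2)"

end

theory Submission imports Defs begin

lemma theta_le:
  fixes t R :: real
  assumes "0 < t" "t \<le> R"
  shows "0 \<le> Theta n t \<and> Theta n t \<le> (1 + R + R\<^sup>2) * t"
proof -
  have R0: "R > 0" using assms by linarith
  have a: "t * \<bar>ln t\<bar> \<le> 1 + R\<^sup>2"
  proof (cases "t \<le> 1")
    case True
    have "ln (1/t) \<le> 1/t - 1" using assms by (intro ln_le_minus_one) auto
    moreover have "ln t \<le> 0" using True assms by simp
    ultimately have "\<bar>ln t\<bar> \<le> 1/t - 1" using assms
      by (simp add: ln_div)
    hence "t * \<bar>ln t\<bar> \<le> t * (1/t - 1)" using assms by (intro mult_left_mono) auto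
    also have "\<dots> \<le> 1" using assms by (simp add: field_simps)
    finally show ?thesis by (smt (verit) zero_le_power2)
  next
    case False
    have "ln t \<le> t - 1" using assms by (intro ln_le_minus_one) auto
    moreover have "ln t \<ge> 0" using False by simp
    ultimately have "t * \<bar>ln t\<bar> \<le> t * t" using assms
      by (intro mult_left_mono) auto
    also have "\<dots> \<le> R\<^sup>2" using assms by (simp add: power2_eq_square mult_mono)
    finally show ?thesis by simp
  qed
  have b: "t\<^sup>2 \<le> R * t" using assms by (simp add: power2_eq_square)
  show ?thesis
  proof (cases "n = 4")
    case True
    have "t\<^sup>2 * \<bar>ln t\<bar> = t * (t * \<bar>ln t\<bar>)" by (simp add: power2_eq_square)
    also have "\<dots> \<le> t * (1 + R\<^sup>2)" using a assms by (intro mult_left_mono) auto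
    also have "\<dots> \<le> (1 + R + R\<^sup>2) * t" using assms R0 by (simp add: algebra_simps)
    finally show ?thesis using True by (simp add: Theta_def)
  next
    case False
    have "0 \<le> t * R\<^sup>2" using assms by simp
    moreover have "t\<^sup>2 \<le> (1 + R + R\<^sup>2) * t" proof -
      have "R * t \<le> (1 + R + R\<^sup>2) * t" using assms by (intro mult_right_mono) auto
      thus ?thesis using b by linarith
    qed
    ultimately show ?thesis using b assms R0 False
      by (auto simp: Theta_def)
  qed
qed

lemma bubble_pos:
  assumes "n \<ge> 3" "\<mu> > 0"
  shows "bubble n \<mu> d > 0"
proof -
  have "real n \<ge> 3" using assms by simp
  hence "\<mu>\<^sup>2 + d\<^sup>2 / (real n * (real n - 2)) > 0" using assms
    by (intro add_pos_nonneg) auto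
  thus ?thesis using assms by (simp add: bubble_def)
qed

lemma bubble_upper:
  assumes "n \<ge> 3" "\<mu> > 0" "d \<ge> 0"
  shows "bubble n \<mu> d \<le> (2 * (real n * (real n - 2)) * \<mu> / (\<mu> + d)\<^sup>2) powr ((real n - 2) / 2)"
proof -
  define c where "c = real n * (real n - 2)"
  define m where "m = (real n - 2) / 2"
  define Q where "Q = \<mu>\<^sup>2 + d\<^sup>2 / c"
  have n3: "real n \<ge> 3" using assms by simp
  have c3: "c \<ge> 3" unfolding c_def
  proof -
    have "3 * 1 \<le> real n * (real n - 2)" using n3 by (intro mult_mono) auto
    thus "3 \<le> real n * (real n - 2)" by simp
  qed
  have c3': "1 \<le> c" using c3 by simp
  have Q0: "Q > 0" unfolding Q_def using assms c3 by (intro add_pos_nonneg) auto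
  have m0: "m \<ge> 0" unfolding m_def using n3 by simp
  have "bubble n \<mu> d = \<mu> powr m * Q powr (- m)"
    unfolding bubble_def Q_def m_def c_def by (simp add: minus_divide_left)
  also have "\<dots> = \<mu> powr m / Q powr m" by (simp add: powr_minus divide_inverse)
  also have "\<dots> = (\<mu> / Q) powr m" using Q0 assms by (simp add: powr_divide)
  also have "\<dots> \<le> (2 * c * \<mu> / (\<mu> + d)\<^sup>2) powr m"
  proof (rule powr_mono2[OF m0])
    show "0 \<le> \<mu> / Q" using assms Q0 by simp
    have th: "(\<mu> + d)\<^sup>2 \<le> 2 * c * Q"
    proof -
      have "(\<mu> + d)\<^sup>2 \<le> 2*\<mu>\<^sup>2 + 2*d\<^sup>2" by (smt (verit) power2_sum zero_le_power2 power2_diff)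
      also have "\<dots> \<le> 2*c*\<mu>\<^sup>2 + 2*d\<^sup>2" using c3 using mult_right_mono[OF c3', of "\<mu>\<^sup>2"] by simp
      also have "\<dots> = 2 * c * Q" unfolding Q_def using c3 by (simp add: field_simps)
      finally show ?thesis .
    qed
    have t0: "(\<mu> + d)\<^sup>2 > 0" using assms by simp
    show "\<mu> / Q \<le> 2 * c * \<mu> / (\<mu> + d)\<^sup>2"
    proof -
      have "\<mu> * (\<mu> + d)\<^sup>2 \<le> \<mu> * (2 * c * Q)" using th assms by (intro mult_left_mono) auto
      thus ?thesis using t0 Q0 by (simp add: divide_simps mult.assoc mult.left_commute)
    qed
  qed
  finally show ?thesis unfolding c_def m_def .
qed

lemma bubble_key:
  fixes \<mu> d R :: real and n :: nat
  defines "p \<equiv> (real n + 2) / (real n - 2)"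
  defines "e \<equiv> (real n - 2) / 2 * (1 - 1 / p)"
  assumes n3: "n \<ge> 3" and mu0: "\<mu> > 0" and d0: "d \<ge> 0" and thR: "\<mu> + d \<le> R"
  shows "(\<mu> + d) * bubble n \<mu> d \<le> (\<mu> powr (1/4) + R * (2 * (real n * (real n - 2))) powr e * \<mu> powr (e/2))
            * (bubble n \<mu> d + bubble n \<mu> d powr (1/p))"
proof -
  define B where "B = bubble n \<mu> d"
  define c where "c = real n * (real n - 2)"
  define m where "m = (real n - 2) / 2"
  define \<theta> where "\<theta> = \<mu> + d"
  define s where "s = \<mu> powr (1/4) + R * (2 * c) powr e * \<mu> powr (e/2)"
  have nr: "real n \<ge> 3" using n3 by simp
  have p1: "p > 1" unfolding p_def using nr by (simp add: field_simps)
  have e0: "e \<ge> 0" unfolding e_def using nr p1 by (intro mult_nonneg_nonneg) (auto simp: field_simps)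
  have c0: "c > 0" unfolding c_def using nr by simp
  have B0: "B > 0" unfolding B_def using bubble_pos n3 mu0 by blast
  have th0: "\<theta> > 0" unfolding \<theta>_def using mu0 d0 by simp
  have R0: "R > 0" using thR th0 \<theta>_def by simp
  have Bup: "B \<le> (2 * c * \<mu> / \<theta>\<^sup>2) powr m"
    unfolding B_def c_def m_def \<theta>_def using bubble_upper n3 mu0 d0 by blast
  have s1: "\<mu> powr (1/4) \<le> s" unfolding s_def using R0 c0 by simp
  have s2: "R * (2 * c) powr e * \<mu> powr (e/2) \<le> s" unfolding s_def by simp
  have Bp: "B powr (1/p) \<ge> 0" by simp
  have s0: "0 \<le> s" using s1 powr_ge_zero[of \<mu> "1/4"] by linarith
  have "\<theta> * B \<le> s * (B + B powr (1/p))"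
  proof (cases "\<theta> \<le> \<mu> powr (1/4)")
    case True
    have "\<theta> * B \<le> s * B" using True s1 B0 by (intro mult_right_mono) auto
    also have "\<dots> \<le> s * (B + B powr (1/p))" using s0 Bp by (intro mult_left_mono) auto
    finally show ?thesis .
  next
    case False
    have q0: "1 - 1/p \<ge> 0" using p1 by simp
    have "B powr (1 - 1/p) \<le> ((2 * c * \<mu> / \<theta>\<^sup>2) powr m) powr (1 - 1/p)"
      using Bup B0 q0 by (intro powr_mono2) auto
    also have "\<dots> = (2 * c * \<mu> / \<theta>\<^sup>2) powr e" unfolding e_def m_def by (simp add: powr_powr)
    also have "\<dots> \<le> (2 * c * \<mu> powr (1/2)) powr e"
    proof (rule powr_mono2[OF e0])
      show "0 \<le> 2 * c * \<mu> / \<theta>\<^sup>2" using c0 mu0 by simp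
      have "\<mu> powr (1/2) = (\<mu> powr (1/4))\<^sup>2" using mu0
        by (simp add: power2_eq_square powr_add[symmetric])
      also have "\<dots> < \<theta>\<^sup>2" using False mu0 by (intro power_strict_mono) auto
      finally have lt: "\<mu> powr (1/2) < \<theta>\<^sup>2" .
      have "\<mu> = \<mu> powr (1/2) * \<mu> powr (1/2)" using mu0 by (simp add: powr_add[symmetric])
      also have "\<dots> \<le> \<mu> powr (1/2) * \<theta>\<^sup>2" using lt by (intro mult_left_mono) auto
      finally have "\<mu> \<le> \<mu> powr (1/2) * \<theta>\<^sup>2" .
      hence "\<mu> / \<theta>\<^sup>2 \<le> \<mu> powr (1/2)" using th0 by (simp add: divide_simps)
      hence "2 * c * (\<mu> / \<theta>\<^sup>2) \<le> 2 * c * \<mu> powr (1/2)" using c0 by (intro mult_left_mono) auto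
      thus "2 * c * \<mu> / \<theta>\<^sup>2 \<le> 2 * c * \<mu> powr (1/2)" by simp
    qed
    also have "\<dots> = (2 * c) powr e * \<mu> powr (e/2)" using c0 mu0
      by (simp add: powr_mult powr_powr)
    finally have Bq: "B powr (1 - 1/p) \<le> (2 * c) powr e * \<mu> powr (e/2)" .
    have "\<theta> * B = \<theta> * B powr (1 - 1/p) * B powr (1/p)" using B0
      by (simp add: powr_add[symmetric])
    also have "\<dots> \<le> (R * ((2 * c) powr e * \<mu> powr (e/2))) * B powr (1/p)"
      using Bq th0 thR \<theta>_def by (intro mult_right_mono mult_mono) auto
    also have "\<dots> \<le> s * (B + B powr (1/p))"
      using s2 s0 B0 Bp by (intro mult_mono) (auto simp: mult.assoc)
    finally show ?thesis .
  qed
  thus ?thesis unfolding s_def B_def \<theta>_def c_def .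
qed

lemma combine:
  fixes A T S p \<tau> :: real
  assumes A0: "A > 0" and T0: "T \<ge> 0" and t0: "0 < \<tau>" and tp: "\<tau> \<le> p" and p1: "p > 1"
    and S0: "S \<ge> 0" and TS: "T \<le> S * (A + A powr (1/p))"
  shows "A powr (p - \<tau>) * T powr \<tau> \<le> (2 * S) powr \<tau> * (A + A powr p)"
proof -
  have "T powr \<tau> \<le> (S * (A + A powr (1/p))) powr \<tau>" using T0 t0 TS by (intro powr_mono2) auto
  also have "\<dots> = S powr \<tau> * (A + A powr (1/p)) powr \<tau>" using S0 A0 by (simp add: powr_mult)
  finally have T1: "T powr \<tau> \<le> S powr \<tau> * (A + A powr (1/p)) powr \<tau>" .
  have ip: "1/p \<le> 1" using p1 by simp
  have main: "A powr (p - \<tau>) * (A + A powr (1/p)) powr \<tau> \<le> 2 powr \<tau> * (A + A powr p)"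
  proof (cases "A \<ge> 1")
    case True
    have "A powr (1/p) \<le> A powr 1" using True ip by (intro powr_mono) auto
    hence "(A + A powr (1/p)) powr \<tau> \<le> (2 * A) powr \<tau>" using A0 t0 by (intro powr_mono2) auto
    also have "\<dots> = 2 powr \<tau> * A powr \<tau>" using A0 by (simp add: powr_mult)
    finally have "A powr (p - \<tau>) * (A + A powr (1/p)) powr \<tau> \<le> A powr (p - \<tau>) * (2 powr \<tau> * A powr \<tau>)"
      by (intro mult_left_mono) auto
    also have "\<dots> = 2 powr \<tau> * A powr p" using A0 by (simp add: powr_add[symmetric] mult.left_commute)
    also have "\<dots> \<le> 2 powr \<tau> * (A + A powr p)" using A0 by (intro mult_left_mono) auto
    finally show ?thesis .
  next
    case False
    have "A powr 1 \<le> A powr (1/p)" using False A0 ip by (intro powr_mono') auto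
    hence "(A + A powr (1/p)) powr \<tau> \<le> (2 * A powr (1/p)) powr \<tau>" using A0 t0 by (intro powr_mono2) auto
    also have "\<dots> = 2 powr \<tau> * A powr (\<tau>/p)" using A0 by (simp add: powr_mult powr_powr)
    finally have "A powr (p - \<tau>) * (A + A powr (1/p)) powr \<tau> \<le> A powr (p - \<tau>) * (2 powr \<tau> * A powr (\<tau>/p))"
      by (intro mult_left_mono) auto
    also have "\<dots> = 2 powr \<tau> * A powr (p - \<tau> + \<tau>/p)" using A0 by (simp add: powr_add mult.left_commute)
    also have "\<dots> \<le> 2 powr \<tau> * A powr 1"
    proof -
      have "\<tau> * (1 - 1/p) \<le> p * (1 - 1/p)" using tp p1 by (intro mult_right_mono) auto
      moreover have "p * (1 - 1/p) = p - 1" using p1 by (simp add: field_simps)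
      moreover have "\<tau> * (1 - 1/p) = \<tau> - \<tau>/p" by (simp add: algebra_simps)
      ultimately have "1 \<le> p - \<tau> + \<tau>/p" by linarith
      hence "A powr (p - \<tau> + \<tau>/p) \<le> A powr 1" using False A0 by (intro powr_mono') auto
      thus ?thesis by (intro mult_left_mono) auto
    qed
    also have "\<dots> \<le> 2 powr \<tau> * (A + A powr p)" using A0 by (intro mult_left_mono) auto
    finally show ?thesis .
  qed
  have "A powr (p - \<tau>) * T powr \<tau> \<le> A powr (p - \<tau>) * (S powr \<tau> * (A + A powr (1/p)) powr \<tau>)"
    using T1 by (intro mult_left_mono) auto
  also have "\<dots> = S powr \<tau> * (A powr (p - \<tau>) * (A + A powr (1/p)) powr \<tau>)" by (simp add: mult_ac)
  also have "\<dots> \<le> S powr \<tau> * (2 powr \<tau> * (A + A powr p))" using main by (intro mult_left_mono) auto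
  also have "\<dots> = (2 * S) powr \<tau> * (A + A powr p)" using S0 by (simp add: powr_mult mult_ac)
  finally show ?thesis .
qed

lemma sum_powr_bound:
  fixes B :: "nat \<Rightarrow> real" and p :: real
  assumes k1: "k \<ge> 1" and Bpos: "\<And>i. i \<in> {1..k} \<Longrightarrow> B i > 0" and p0: "p \<ge> 0"
  shows "(\<Sum>i=1..k. B i) powr p \<le> real k powr p * (\<Sum>i=1..k. B i powr p)"
proof -
  define A where "A = (\<Sum>i=1..k. B i)"
  obtain j where j: "j \<in> {1..k}" "A \<le> real k * B j"
  proof (rule ccontr)
    assume "\<not> thesis"
    with that have h: "\<And>j. j \<in> {1..k} \<Longrightarrow> B j < A / real k" using k1 by (force simp: field_simps)
    have "A < (\<Sum>i=1..k. A / real k)" unfolding A_def using k1 h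
      by (intro sum_strict_mono) (auto simp: A_def)
    also have "\<dots> = A" using k1 by simp
    finally show False by simp
  qed
  have A0: "A \<ge> 0" unfolding A_def using Bpos by (intro sum_nonneg) (auto intro: less_imp_le)
  have "A powr p \<le> (real k * B j) powr p" using j A0 p0 by (intro powr_mono2) auto
  also have "\<dots> = real k powr p * B j powr p" using Bpos j by (simp add: powr_mult)
  also have "\<dots> \<le> real k powr p * (\<Sum>i=1..k. B i powr p)"
    using j by (intro mult_left_mono member_le_sum) auto
  finally show ?thesis unfolding A_def .
qed

theorem lemmaA2:
  fixes M :: "'a::metric_space set"
    and n k :: nat
    and \<tau> :: real
    and \<mu> :: "nat \<Rightarrow> nat \<Rightarrow> real"
    and xc :: "nat \<Rightarrow> nat \<Rightarrow> 'a"
  assumes M_compact: "compact M"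
    and n_ge: "n \<ge> 3"
    and k_ge: "k \<ge> 1"
    and tau_pos: "0 < \<tau>"
    and tau_le: "\<tau> \<le> crit_exp n - 1"
    and centres_in: "\<And>i \<alpha>. i \<in> {1..k} \<Longrightarrow> xc i \<alpha> \<in> M"
    and mu_pos: "\<And>i \<alpha>. i \<in> {1..k} \<Longrightarrow> \<mu> i \<alpha> > 0"
    and mu_to_0: "\<And>i. i \<in> {1..k} \<Longrightarrow> (\<lambda>\<alpha>. \<mu> i \<alpha>) \<longlonglongrightarrow> 0"
    and separated: "\<And>i j. i \<in> {1..k} \<Longrightarrow> j \<in> {1..k} \<Longrightarrow> i \<noteq> j \<Longrightarrow>
        filterlim (\<lambda>\<alpha>. \<mu> i \<alpha> / \<mu> j \<alpha> + \<mu> j \<alpha> / \<mu> i \<alpha>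
                        + (dist (xc i \<alpha>) (xc j \<alpha>))\<^sup>2 / (\<mu> i \<alpha> * \<mu> j \<alpha>))
                  at_top sequentially"
  shows "\<exists>\<sigma> :: nat \<Rightarrow> real. (\<forall>\<alpha>. \<sigma> \<alpha> > 0) \<and> \<sigma> \<longlonglongrightarrow> 0 \<and>
     (\<forall>B0 \<in> {0::real, 1}. \<forall>\<alpha>. \<forall>x \<in> M.
        (\<Sum>i=1..k. bubble n (\<mu> i \<alpha>) (dist (xc i \<alpha>) x)) powr (crit_exp n - 1 - \<tau>)
        * (\<Sum>i=1..k. Theta n (\<mu> i \<alpha> + dist (xc i \<alpha>) x)
                       * bubble n (\<mu> i \<alpha>) (dist (xc i \<alpha>) x)) powr \<tau>
        \<le> \<sigma> \<alpha> * (B0 + (\<Sum>i=1..k. bubble n (\<mu> i \<alpha>) (dist (xc i \<alpha>) x))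
                     + (\<Sum>i=1..k. bubble n (\<mu> i \<alpha>) (dist (xc i \<alpha>) x) powr (crit_exp n - 1))))"
proof -
  define p where "p = (real n + 2) / (real n - 2)"
  define e where "e = (real n - 2) / 2 * (1 - 1 / p)"
  define c where "c = real n * (real n - 2)"
  have nr: "real n \<ge> 3" using n_ge by simp
  have pce: "crit_exp n - 1 = p" unfolding crit_exp_def p_def using nr by (simp add: field_simps)
  have p1: "p > 1" unfolding p_def using nr by (simp add: field_simps)
  have tp: "\<tau> \<le> p" using tau_le pce by simp
  have e0: "e > 0" unfolding e_def using nr p1 by (intro mult_pos_pos) (auto simp: field_simps)
  obtain D where D: "\<And>y z. y \<in> M \<Longrightarrow> z \<in> M \<Longrightarrow> dist y z \<le> D"
  proof -
    have "bounded M" using M_compact by (rule compact_imp_bounded)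
    then obtain a \<epsilon> where h: "\<forall>y\<in>M. dist a y \<le> \<epsilon>" unfolding bounded_def by blast
    show ?thesis
    proof (rule that)
      fix y z assume "y \<in> M" "z \<in> M"
      hence "dist a y \<le> \<epsilon>" "dist a z \<le> \<epsilon>" using h by auto
      thus "dist y z \<le> 2 * \<epsilon>" using dist_triangle3[of y z a] by linarith
    qed
  qed
  have musum: "(\<lambda>\<alpha>. \<Sum>i=1..k. \<mu> i \<alpha>) \<longlonglongrightarrow> 0"
    using tendsto_sum[of "{1..k}" "\<lambda>i \<alpha>. \<mu> i \<alpha>" "\<lambda>_. 0" sequentially] mu_to_0 by simp
  then obtain Km where Km: "Km > 0" "\<And>\<alpha>. norm (\<Sum>i=1..k. \<mu> i \<alpha>) \<le> Km"
    using convergent_imp_Bseq[of "\<lambda>\<alpha>. \<Sum>i=1..k. \<mu> i \<alpha>"] BseqE convergentI by metis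
  have mule: "\<mu> i \<alpha> \<le> Km" if "i \<in> {1..k}" for i \<alpha>
  proof -
    have "\<mu> i \<alpha> \<le> (\<Sum>i=1..k. \<mu> i \<alpha>)" using that mu_pos
      by (intro member_le_sum) (auto intro: less_imp_le)
    also have "\<dots> \<le> Km" using Km(2)[of \<alpha>] by simp
    finally show ?thesis .
  qed
  define R where "R = Km + \<bar>D\<bar> + 1"
  have R0: "R > 0" unfolding R_def using Km by simp
  have thR: "\<mu> i \<alpha> + dist (xc i \<alpha>) x \<le> R" if "i \<in> {1..k}" "x \<in> M" for i \<alpha> x
    using mule[OF that(1), of \<alpha>] D[OF centres_in[OF that(1), of \<alpha>] that(2)] unfolding R_def by linarith
  define K where "K = 1 + R + R\<^sup>2"
  have K0: "K > 0" unfolding K_def using R0 by (simp add: add_pos_nonneg)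
  define s where "s = (\<lambda>m::real. m powr (1/4) + R * (2 * c) powr e * m powr (e/2))"
  have s0: "s m \<ge> 0" for m unfolding s_def using R0 by simp
  define S where "S = (\<lambda>\<alpha>. K * (\<Sum>i=1..k. s (\<mu> i \<alpha>)))"
  have S0: "S \<alpha> \<ge> 0" for \<alpha> unfolding S_def using K0 s0 by (intro mult_nonneg_nonneg sum_nonneg) auto
  define \<sigma> where "\<sigma> = (\<lambda>\<alpha>. (2 * S \<alpha>) powr \<tau> * real k powr p + inverse (real (Suc \<alpha>)))"
  have \<sigma>pos: "\<forall>\<alpha>. \<sigma> \<alpha> > 0" unfolding \<sigma>_def
    by (intro allI add_nonneg_pos mult_nonneg_nonneg) auto
  have slim: "(\<lambda>\<alpha>. s (\<mu> i \<alpha>)) \<longlonglongrightarrow> 0" if "i \<in> {1..k}" for i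
  proof -
    have ev: "\<forall>\<^sub>F \<alpha> in sequentially. 0 \<le> \<mu> i \<alpha>" using mu_pos[OF that] by (simp add: less_imp_le)
    have a: "(\<lambda>\<alpha>. \<mu> i \<alpha> powr (1/4)) \<longlonglongrightarrow> 0"
      by (rule tendsto_zero_powrI[OF mu_to_0[OF that] tendsto_const ev]) simp
    have b: "(\<lambda>\<alpha>. \<mu> i \<alpha> powr (e/2)) \<longlonglongrightarrow> 0"
      by (rule tendsto_zero_powrI[OF mu_to_0[OF that] tendsto_const ev]) (use e0 in simp)
    have b': "(\<lambda>\<alpha>. R * (2 * c) powr e * \<mu> i \<alpha> powr (e/2)) \<longlonglongrightarrow> 0"
      using tendsto_mult[OF tendsto_const b, of "R * (2 * c) powr e"] by simp
    show ?thesis unfolding s_def using tendsto_add_zero[OF a b'] by simp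
  qed
  have Slim: "S \<longlonglongrightarrow> 0"
  proof -
    have "(\<lambda>\<alpha>. \<Sum>i=1..k. s (\<mu> i \<alpha>)) \<longlonglongrightarrow> 0"
      using tendsto_sum[of "{1..k}" "\<lambda>i \<alpha>. s (\<mu> i \<alpha>)" "\<lambda>_. 0" sequentially] slim by simp
    from tendsto_mult[OF tendsto_const this, of K] show ?thesis unfolding S_def by simp
  qed
  have \<sigma>lim: "\<sigma> \<longlonglongrightarrow> 0"
  proof -
    have "(\<lambda>\<alpha>. 2 * S \<alpha>) \<longlonglongrightarrow> 0" using tendsto_mult[OF tendsto_const Slim, of 2] by simp
    hence "(\<lambda>\<alpha>. (2 * S \<alpha>) powr \<tau>) \<longlonglongrightarrow> 0"
      by (rule tendsto_zero_powrI[OF _ tendsto_const]) (use S0 tau_pos in auto)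
    from tendsto_mult[OF this tendsto_const, of "real k powr p"]
    have "(\<lambda>\<alpha>. (2 * S \<alpha>) powr \<tau> * real k powr p) \<longlonglongrightarrow> 0" by simp
    from tendsto_add_zero[OF this LIMSEQ_inverse_real_of_nat] show ?thesis unfolding \<sigma>_def .
  qed
  have ineq: "(\<Sum>i=1..k. bubble n (\<mu> i \<alpha>) (dist (xc i \<alpha>) x)) powr (crit_exp n - 1 - \<tau>)
        * (\<Sum>i=1..k. Theta n (\<mu> i \<alpha> + dist (xc i \<alpha>) x)
                       * bubble n (\<mu> i \<alpha>) (dist (xc i \<alpha>) x)) powr \<tau>
        \<le> \<sigma> \<alpha> * (B0 + (\<Sum>i=1..k. bubble n (\<mu> i \<alpha>) (dist (xc i \<alpha>) x))
                     + (\<Sum>i=1..k. bubble n (\<mu> i \<alpha>) (dist (xc i \<alpha>) x) powr (crit_exp n - 1)))"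
    if B0: "B0 \<in> {0::real, 1}" and xM: "x \<in> M" for B0 \<alpha> x
  proof -
    define B where "B = (\<lambda>i. bubble n (\<mu> i \<alpha>) (dist (xc i \<alpha>) x))"
    define A where "A = (\<Sum>i=1..k. B i)"
    define T where "T = (\<Sum>i=1..k. Theta n (\<mu> i \<alpha> + dist (xc i \<alpha>) x) * B i)"
    have Bpos: "B i > 0" if "i \<in> {1..k}" for i
      unfolding B_def using bubble_pos n_ge mu_pos[OF that] by blast
    have A0: "A > 0" unfolding A_def using Bpos k_ge by (intro sum_pos) auto
    have BA: "B i \<le> A" if "i \<in> {1..k}" for i
      unfolding A_def using that Bpos by (intro member_le_sum) (auto intro: less_imp_le)
    have thpos: "0 < \<mu> i \<alpha> + dist (xc i \<alpha>) x" if "i \<in> {1..k}" for i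
      using mu_pos[OF that] by (simp add: add_pos_nonneg)
    have T0: "T \<ge> 0" unfolding T_def
      using theta_le[OF thpos thR[OF _ xM]] Bpos by (intro sum_nonneg mult_nonneg_nonneg) (auto intro: less_imp_le)
    have Tle: "T \<le> S \<alpha> * (A + A powr (1/p))"
    proof -
      have "T \<le> (\<Sum>i=1..k. K * s (\<mu> i \<alpha>) * (A + A powr (1/p)))" unfolding T_def
      proof (rule sum_mono)
        fix i assume i: "i \<in> {1..k}"
        have "Theta n (\<mu> i \<alpha> + dist (xc i \<alpha>) x) * B i \<le> K * (\<mu> i \<alpha> + dist (xc i \<alpha>) x) * B i"
          using theta_le[OF thpos[OF i] thR[OF i xM]] Bpos[OF i] unfolding K_def
          by (intro mult_right_mono) auto
        also have "\<dots> = K * ((\<mu> i \<alpha> + dist (xc i \<alpha>) x) * B i)" by simp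
        also have "\<dots> \<le> K * (s (\<mu> i \<alpha>) * (B i + B i powr (1/p)))"
          using bubble_key[OF n_ge mu_pos[OF i] zero_le_dist thR[OF i xM]] K0
          unfolding B_def s_def e_def p_def c_def by (intro mult_left_mono) auto
        also have "\<dots> \<le> K * (s (\<mu> i \<alpha>) * (A + A powr (1/p)))"
        proof -
          have "B i powr (1/p) \<le> A powr (1/p)" using BA[OF i] Bpos[OF i] p1 by (intro powr_mono2) auto
          hence "B i + B i powr (1/p) \<le> A + A powr (1/p)" using BA[OF i] by linarith
          thus ?thesis using K0 s0 by (intro mult_left_mono) auto
        qed
        finally show "Theta n (\<mu> i \<alpha> + dist (xc i \<alpha>) x) * B i \<le> K * s (\<mu> i \<alpha>) * (A + A powr (1/p))"
          by (simp add: mult.assoc)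
      qed
      also have "\<dots> = S \<alpha> * (A + A powr (1/p))" unfolding S_def
        by (simp add: sum_distrib_left sum_distrib_right mult.assoc)
      finally show ?thesis .
    qed
    have "A powr (p - \<tau>) * T powr \<tau> \<le> (2 * S \<alpha>) powr \<tau> * (A + A powr p)"
      by (rule combine[OF A0 T0 tau_pos tp p1 S0 Tle])
    also have "\<dots> \<le> (2 * S \<alpha>) powr \<tau> * (real k powr p * (A + (\<Sum>i=1..k. B i powr p)))"
    proof (rule mult_left_mono)
      have kp: "real k powr p \<ge> 1" using k_ge p1 by (intro ge_one_powr_ge_zero) auto
      have "A powr p \<le> real k powr p * (\<Sum>i=1..k. B i powr p)"
        unfolding A_def using sum_powr_bound[OF k_ge Bpos] p1 by simp
      moreover have "A \<le> real k powr p * A" using kp A0 by simp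
      ultimately show "A + A powr p \<le> real k powr p * (A + (\<Sum>i=1..k. B i powr p))"
        by (simp add: distrib_left)
    qed simp
    also have "\<dots> = ((2 * S \<alpha>) powr \<tau> * real k powr p) * (A + (\<Sum>i=1..k. B i powr p))" by simp
    also have "\<dots> \<le> \<sigma> \<alpha> * (B0 + A + (\<Sum>i=1..k. B i powr p))"
    proof (rule mult_mono)
      show "(2 * S \<alpha>) powr \<tau> * real k powr p \<le> \<sigma> \<alpha>" unfolding \<sigma>_def by simp
      show "A + (\<Sum>i=1..k. B i powr p) \<le> B0 + A + (\<Sum>i=1..k. B i powr p)" using B0 by auto
      show "0 \<le> \<sigma> \<alpha>" using \<sigma>pos by (simp add: less_imp_le)
      show "0 \<le> A + (\<Sum>i=1..k. B i powr p)" using A0 by (simp add: sum_nonneg)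
    qed
    finally show ?thesis unfolding A_def T_def B_def pce by simp
  qed
  show ?thesis using \<sigma>pos \<sigma>lim ineq by blast
qed

end
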